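(* Let $J\subseteq S$ and $s\in S$. (1) If $s\in J$, then $t_s\tau^+_J$ reduces to $q\tau^-_J$ and $t_s\tau^-_J$ reduces to $\tau^+_J$ modulo $G_q(\emptyset)$. (2) If $s\notin J$ and $J'=\{j\in J\mid j<s\}$, then modulo $G_q(\emptyset)$, $t_s\tau^+_J$ reduces to $(-1)^{\#J'}\tau^+_{J\cup\{s\}}+q\tau^-_J$ and $t_s\tau^-_J$ reduces to $(-1)^{\#J'-1}\tau^-_{J\cup\{s\}}+\tau^+_J$.
   Context: $S$ is a finite set with a total order $<$, $R$ a commutative ring with $1$, $q\in R$, $A=R\langle t_s\mid s\in S\rangle$. For $J=\{j_1<\dots<j_{\#J}\}$, $t_J=t_{j_1}\cdots t_{j_{\#J}}$; for $I=\{j_{\alpha_1}<\dots<j_{\alpha_{\#I}}\}\subseteq J$, $\ell_J(I)=\sum_\nu(\alpha_\nu-\nu)$; $\tau^-_J=\sum_{I\subseteq J,\ \#I\text{ odd}}(-1)^{\ell_J(I)}(-q)^{(\#I-1)/2}t_{J\setminus I}$, $\tau^+_J=\sum_{I\subseteq J,\ \#I\text{ even}}(-1)^{\ell_J(I)}(-q)^{\#I/2}t_{J\setminus I}$. $G_q(\emptyset)=\{t_s^2-q: s\in S\}\cup\{t_rt_s+t_st_r-2q: r,s\in S,\ s<r\}$; the leading monomials of these are $t_s^2$ and $t_rt_s$ ($s<r$) w.r.t. the degree lexicographic order (words compared by length, then lexicographically from the left). For a set $\mathcal I$ of elements of $A$ with leading coefficient $1$, a reduction of $f\in A$ modulo $\mathcal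 I$ is obtained by choosing $g\in\mathcal I$ with leading monomial $m$ and a monomial $umv$ of $f$ (with coefficient $c$) and replacing $c\,umv$ by $c\,u(m-g)v$; $f$ reduces to $h$ modulo $\mathcal I$ if there is a finite sequence $f=f_0,f_1,\dots,f_k=h$ ($k\ge0$) with each $f_{i+1}$ a reduction of $f_i$. *)

theory Defs
  imports Main
begin

text \<open>The finite totally ordered set S is the
type 'a :: {linorder, finite}. Words over S are lists; an element of the algebra
is represented by its coefficient function on words (all elements used below
have finite support).\<close>

type_synonym ('a, 'r) falg = "'a list \<Rightarrow> 'r"

definition mono :: "'a list \<Rightarrow> ('a, 'r::comm_ring_1) falg" where
  "mono u = (\<lambda>w. if w = u then 1 else 0)"

definition gen :: "'a \<Rightarrow> ('a, 'r::comm_ring_1) falg" where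
  "gen s = mono [s]"

definition fadd :: "('a, 'r::comm_ring_1) falg \<Rightarrow> ('a, 'r) falg \<Rightarrow> ('a, 'r) falg" where
  "fadd f g = (\<lambda>w. f w + g w)"

definition fsub :: "('a, 'r::comm_ring_1) falg \<Rightarrow> ('a, 'r) falg \<Rightarrow> ('a, 'r) falg" where
  "fsub f g = (\<lambda>w. f w - g w)"

definition smul :: "'r::comm_ring_1 \<Rightarrow> ('a, 'r) falg \<Rightarrow> ('a, 'r) falg" where
  "smul c f = (\<lambda>w. c * f w)"

definition fmul :: "('a, 'r::comm_ring_1) falg \<Rightarrow> ('a, 'r) falg \<Rightarrow> ('a, 'r) falg" where
  "fmul f g = (\<lambda>w. \<Sum>i\<le>length w. f (take i w) * g (drop i w))"

definition tset :: "'a::{linorder,finite} set \<Rightarrow> ('a, 'r::comm_ring_1) falg" where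
  "tset J = mono (sorted_list_of_set J)"

text \<open>ell_J(I) = sum_nu (alpha_nu - nu); alpha_nu - 1 (the 0-based position of the
nu-th element x of I inside J) is card {y in J. y < x}.\<close>
definition ell :: "'a::{linorder,finite} set \<Rightarrow> 'a set \<Rightarrow> nat" where
  "ell J I = (\<Sum>\<nu><card I. card {y\<in>J. y < sorted_list_of_set I ! \<nu>} - \<nu>)"

definition tau_minus :: "'r::comm_ring_1 \<Rightarrow> 'a::{linorder,finite} set \<Rightarrow> ('a, 'r) falg" where
  "tau_minus q J = (\<lambda>w. \<Sum>I\<in>{I. I \<subseteq> J \<and> odd (card I)}.
       (-1) ^ ell J I * (-q) ^ ((card I - 1) div 2) * tset (J - I) w)"

definition tau_plus :: "'r::comm_ring_1 \<Rightarrow> 'a::{linorder,finite} set \<Rightarrow> ('a, 'r) falg" where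
  "tau_plus q J = (\<lambda>w. \<Sum>I\<in>{I. I \<subseteq> J \<and> even (card I)}.
       (-1) ^ ell J I * (-q) ^ (card I div 2) * tset (J - I) w)"

definition deglex_less :: "'a::linorder list \<Rightarrow> 'a list \<Rightarrow> bool" where
  "deglex_less v w \<longleftrightarrow> length v < length w \<or>
     (length v = length w \<and> (\<exists>p a b x y. v = p @ a # x \<and> w = p @ b # y \<and> a < b))"

definition is_lm :: "('a::linorder, 'r::comm_ring_1) falg \<Rightarrow> 'a list \<Rightarrow> bool" where
  "is_lm g m \<longleftrightarrow> g m = 1 \<and> (\<forall>w. g w \<noteq> 0 \<longrightarrow> w = m \<or> deglex_less w m)"

definition Gq :: "'r::comm_ring_1 \<Rightarrow> ('a::{linorder,finite}, 'r) falg set" where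
  "Gq q = {fsub (mono [s, s]) (smul q (mono [])) | s. True}
        \<union> {fsub (fadd (mono [r, s]) (mono [s, r])) (smul (2 * q) (mono [])) | r s. s < r}"

text \<open>One reduction step: replace c*umv by c*u(m-g)v, i.e. subtract c*u g v.\<close>
definition red_step :: "('a::linorder, 'r::comm_ring_1) falg set \<Rightarrow> ('a, 'r) falg \<Rightarrow> ('a, 'r) falg \<Rightarrow> bool" where
  "red_step I f h \<longleftrightarrow> (\<exists>g\<in>I. \<exists>m u v. is_lm g m \<and> f (u @ m @ v) \<noteq> 0 \<and>
      h = fsub f (smul (f (u @ m @ v)) (fmul (fmul (mono u) g) (mono v))))"

definition reduces :: "('a::linorder, 'r::comm_ring_1) falg set \<Rightarrow> ('a, 'r) falg \<Rightarrow> ('a, 'r) falg \<Rightarrow> bool" where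
  "reduces I = (red_step I)\<^sup>*\<^sup>*"

end

theory Submission
  imports Defs "HOL-Library.Multiset"
begin

definition sg :: "'a::linorder set \<Rightarrow> 'a \<Rightarrow> 'r::comm_ring_1" where
  "sg K a = (-1) ^ card {k\<in>K. k < a}"

definition wdg :: "'a::{linorder,finite} \<Rightarrow> ('a set \<Rightarrow> 'r::comm_ring_1) \<Rightarrow> 'a set \<Rightarrow> 'r" where
  "wdg a X = (\<lambda>K. if a \<in> K then sg K a * X (K - {a}) else 0)"

definition bd :: "('a::{linorder,finite} set \<Rightarrow> 'r::comm_ring_1) \<Rightarrow> 'a set \<Rightarrow> 'r" where
  "bd X = (\<lambda>K. \<Sum>k\<in>-K. sg K k * X (insert k K))"

lemma sg_insert: "(k::'a::{linorder,finite}) \<notin> K \<Longrightarrow> sg (insert k K) l = (if k < l then - sg K l else (sg K l :: 'r::comm_ring_1))"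
proof -
  assume k: "k \<notin> K"
  have fin: "finite {x\<in>K. x < l}" by simp
  show ?thesis
  proof (cases "k < l")
    case True
    then have "{x\<in>insert k K. x < l} = insert k {x\<in>K. x < l}" by auto
    then have "card {x\<in>insert k K. x < l} = Suc (card {x\<in>K. x < l})" using k fin by simp
    then show ?thesis using True by (simp add: sg_def)
  next
    case False
    then have "{x\<in>insert k K. x < l} = {x\<in>K. x < l}" by auto
    then show ?thesis using False by (simp add: sg_def)
  qed
qed

lemma sg_remove: "(a::'a::{linorder,finite}) \<in> K \<Longrightarrow> sg K l = (if a < l then - sg (K - {a}) l else (sg (K - {a}) l :: 'r::comm_ring_1))"
proof -
  assume a: "a \<in> K"
  have "K = insert a (K - {a})" using a by auto
  then have "sg K l = (sg (insert a (K - {a})) l :: 'r)" by simp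
  also have "\<dots> = (if a < l then - sg (K - {a}) l else sg (K - {a}) l)" by (rule sg_insert) simp
  finally show ?thesis .
qed

lemma sg_self_insert: "sg (insert a K) (a::'a::{linorder,finite}) = sg K a"
  unfolding sg_def by (rule arg_cong[where f="\<lambda>n. (-1)^n"]) (rule arg_cong[where f=card], auto)

lemma sg_sq: "sg K a * sg K a = (1::'r::comm_ring_1)"
  by (simp add: sg_def flip: power_add)

lemma sg_remove': "(a::'a::{linorder,finite}) \<in> K \<Longrightarrow> sg (K - {a}) l = (if a < l then - sg K l else (sg K l :: 'r::comm_ring_1))"
  by (cases "a < l") (simp_all add: sg_remove[of a K l])

lemma wdg_wdg: "wdg a (wdg a X) K = 0"
  by (simp add: wdg_def)

lemma wdg_anti: assumes "a \<noteq> b" shows "wdg a (wdg b X) K + wdg b (wdg a X) K = (0::'r::comm_ring_1)"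
proof (cases "a \<in> K \<and> b \<in> K")
  case True
  have e: "K - {a} - {b} = K - {b} - {a}" by auto
  have "sg K a * sg (K - {a}) b + sg K b * sg (K - {b}) a = (0::'r)"
    using True assms
    by (cases "a < b") (auto simp: algebra_simps sg_remove')
  then show ?thesis using True assms e by (simp add: wdg_def algebra_simps)
       (metis (no_types) distrib_right mult.assoc mult_zero_left)
next
  case False
  then show ?thesis by (auto simp: wdg_def)
qed

lemma wdg_bd: "wdg a (bd X) K + bd (wdg a X) K = (X K :: 'r::comm_ring_1)"
proof (cases "a \<in> K")
  case True
  have c: "- (K - {a}) = insert a (-K)" using True by auto
  have aK: "a \<notin> -K" using True by auto
  have iK: "insert a (K - {a}) = K" using True by auto
  have s1: "wdg a (bd X) K = sg K a * sg K a * X K + (\<Sum>k\<in>-K. sg K a * sg (K - {a}) k * X (insert k (K - {a})))"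
    using True aK by (simp add: wdg_def bd_def c iK sg_remove' sum_distrib_left algebra_simps insert_absorb)
  have s2: "bd (wdg a X) K = (\<Sum>k\<in>-K. sg K k * sg (insert k K) a * X (insert k (K - {a})))"
    unfolding bd_def wdg_def using True
    by (intro sum.cong refl) (auto simp: insert_Diff_if)
  have s3: "(\<Sum>k\<in>-K. sg K a * sg (K - {a}) k * X (insert k (K - {a}))) + (\<Sum>k\<in>-K. sg K k * sg (insert k K) a * X (insert k (K - {a}))) = (0::'r)"
  proof -
    have "\<And>k. k \<in> -K \<Longrightarrow> sg K a * sg (K - {a}) k * X (insert k (K - {a})) + sg K k * sg (insert k K) a * X (insert k (K - {a})) = (0::'r)"
    proof -
      fix k assume k: "k \<in> -K"
      then have "k \<noteq> a" using True by auto
      then have "sg K a * sg (K - {a}) k + sg K k * sg (insert k K) a = (0::'r)"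
        using k True by (cases "a < k") (auto simp: sg_remove' sg_insert algebra_simps)
      then show "sg K a * sg (K - {a}) k * X (insert k (K - {a})) + sg K k * sg (insert k K) a * X (insert k (K - {a})) = (0::'r)"
        by (metis distrib_right mult_zero_left)
    qed
    then show ?thesis by (simp add: sum.distrib[symmetric])
  qed
  show ?thesis using s1 s2 s3 by (simp add: sg_sq)
next
  case False
  have "bd (wdg a X) K = (\<Sum>k\<in>-K. if k = a then sg K a * sg (insert a K) a * X (insert a K - {a}) else 0)"
    unfolding bd_def wdg_def using False by (intro sum.cong refl) auto
  also have "\<dots> = X K" using False by (simp add: sg_self_insert sg_sq)
  finally show ?thesis using False by (simp add: wdg_def)
qed

lemma sg_pair: "k \<notin> K \<Longrightarrow> l \<notin> K \<Longrightarrow> k \<noteq> l \<Longrightarrow>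
   sg K k * sg (insert k K) l + sg K l * sg (insert l K) (k::'a::{linorder,finite}) = (0::'r::comm_ring_1)"
  by (cases "k < l") (auto simp: sg_insert algebra_simps)

lemma bd_bd: "bd (bd X) K = (0::'r::comm_ring_1)"
proof -
  define F where "F k l = sg K k * sg (insert k K) l * X (insert l (insert k K))" for k l
  have "bd (bd X) K = (\<Sum>k\<in>-K. sg K k * bd X (insert k K))" by (simp add: bd_def)
  also have "\<dots> = (\<Sum>k\<in>-K. \<Sum>l\<in>-K. if k \<noteq> l then F k l else 0)"
  proof (intro sum.cong refl)
    fix k assume k: "k \<in> -K"
    have e: "- insert k K = {l\<in>-K. k \<noteq> l}" by auto
    have "(\<Sum>l\<in>- insert k K. sg (insert k K) l * X (insert l (insert k K))) = (\<Sum>l\<in>-K. if k \<noteq> l then sg (insert k K) l * X (insert l (insert k K)) else 0)"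
      unfolding e by (rule sum.inter_filter) simp
    then have "sg K k * bd X (insert k K) = sg K k * (\<Sum>l\<in>-K. if k \<noteq> l then sg (insert k K) l * X (insert l (insert k K)) else 0)"
      by (simp add: bd_def)
    also have "\<dots> = (\<Sum>l\<in>-K. if k \<noteq> l then F k l else 0)"
      unfolding sum_distrib_left by (intro sum.cong refl) (simp add: F_def mult.assoc)
    finally show "sg K k * bd X (insert k K) = (\<Sum>l\<in>-K. if k \<noteq> l then F k l else 0)" .
  qed
  also have "\<dots> = (\<Sum>k\<in>-K. \<Sum>l\<in>-K. (if k < l then F k l else 0) + (if l < k then F k l else 0))"
    by (intro sum.cong refl) (auto simp: neq_iff)
  also have "\<dots> = (\<Sum>k\<in>-K. \<Sum>l\<in>-K. if k < l then F k l else 0) + (\<Sum>k\<in>-K. \<Sum>l\<in>-K. if l < k then F k l else 0)"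
    by (simp add: sum.distrib)
  also have "(\<Sum>k\<in>-K. \<Sum>l\<in>-K. if l < k then F k l else 0) = (\<Sum>k\<in>-K. \<Sum>l\<in>-K. if k < l then F l k else 0)"
    by (rule sum.swap)
  also have "(\<Sum>k\<in>-K. \<Sum>l\<in>-K. if k < l then F k l else 0) + (\<Sum>k\<in>-K. \<Sum>l\<in>-K. if k < l then F l k else 0)
     = (\<Sum>k\<in>-K. \<Sum>l\<in>-K. if k < l then F k l + F l k else 0)"
    unfolding sum.distrib[symmetric] by (intro sum.cong refl) simp
  also have "\<dots> = 0"
  proof (intro sum.neutral ballI)
    fix k l assume "k \<in> -K" "l \<in> -K"
    have e: "insert k (insert l K) = insert l (insert k K)" by (rule insert_commute)
    have "F k l + F l k = (sg K k * sg (insert k K) l + sg K l * sg (insert l K) k) * X (insert l (insert k K))"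
      unfolding F_def e by (simp only: distrib_right)
    then show "(if k < l then F k l + F l k else 0) = 0"
      using sg_pair[of k K l, where 'r='r] \<open>k \<in> -K\<close> \<open>l \<in> -K\<close> by auto
  qed
  finally show ?thesis .
qed

definition Tg :: "'r::comm_ring_1 \<Rightarrow> 'a::{linorder,finite} \<Rightarrow> ('a set \<Rightarrow> 'r) \<Rightarrow> 'a set \<Rightarrow> 'r" where
  "Tg q a X = (\<lambda>K. wdg a X K + q * bd X K)"

primrec act :: "'r::comm_ring_1 \<Rightarrow> 'a::{linorder,finite} list \<Rightarrow> ('a set \<Rightarrow> 'r) \<Rightarrow> 'a set \<Rightarrow> 'r" where
  "act q [] X = X"
| "act q (a # w) X = Tg q a (act q w X)"

lemma act_append: "act q (u @ w) X = act q u (act q w X)"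
  by (induction u) auto

lemma wdg_add: "wdg a (\<lambda>K. X K + Y K) K = wdg a X K + wdg a Y K"
  by (simp add: wdg_def algebra_simps)
lemma wdg_smul: "wdg a (\<lambda>K. c * X K) K = c * wdg a X K"
  by (simp add: wdg_def algebra_simps)
lemma bd_add: "bd (\<lambda>K. X K + Y K) K = bd X K + bd Y K"
  by (simp add: bd_def algebra_simps sum.distrib)
lemma bd_smul: "bd (\<lambda>K. c * X K) K = c * bd X K"
  by (simp add: bd_def algebra_simps sum_distrib_left)
lemma wdg_sum: "wdg a (\<lambda>K. \<Sum>i\<in>A. c i * Y i K) K = (\<Sum>i\<in>A. c i * wdg a (Y i) K)"
  by (simp add: wdg_def algebra_simps sum_distrib_left)
lemma bd_sum: "bd (\<lambda>K. \<Sum>i\<in>A. c i * Y i K) K = (\<Sum>i\<in>A. c i * bd (Y i) K)"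
  unfolding bd_def by (simp add: sum_distrib_left algebra_simps) (rule sum.swap)

lemma Tg_add: "Tg q a (\<lambda>K. X K + Y K) K = Tg q a X K + Tg q a Y K"
  by (simp add: Tg_def wdg_add bd_add algebra_simps)
lemma Tg_smul: "Tg q a (\<lambda>K. c * X K) K = c * Tg q a X K"
  by (simp add: Tg_def wdg_smul bd_smul algebra_simps)
lemma Tg_sum: "Tg q a (\<lambda>K. \<Sum>i\<in>A. c i * Y i K) K = (\<Sum>i\<in>A. c i * Tg q a (Y i) K)"
  by (simp add: Tg_def wdg_sum bd_sum algebra_simps sum.distrib sum_distrib_left)

lemma act_add: "act q u (\<lambda>K. X K + Y K) K = act q u X K + act q u Y K"
proof (induction u arbitrary: K)
  case Nil then show ?case by simp
next
  case (Cons a u)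
  have "act q u (\<lambda>K. X K + Y K) = (\<lambda>K. act q u X K + act q u Y K)" using Cons by auto
  then show ?case by (simp add: Tg_add)
qed

lemma act_smul: "act q u (\<lambda>K. c * X K) K = c * act q u X K"
proof (induction u arbitrary: K)
  case Nil then show ?case by simp
next
  case (Cons a u)
  have "act q u (\<lambda>K. c * X K) = (\<lambda>K. c * act q u X K)" using Cons by auto
  then show ?case by (simp add: Tg_smul)
qed

lemma act_sum: "act q u (\<lambda>K. \<Sum>i\<in>A. c i * Y i K) K = (\<Sum>i\<in>A. c i * act q u (Y i) K)"
proof (induction u arbitrary: K)
  case Nil then show ?case by simp
next
  case (Cons a u)
  have "act q u (\<lambda>K. \<Sum>i\<in>A. c i * Y i K) = (\<lambda>K. \<Sum>i\<in>A. c i * act q u (Y i) K)" using Cons by auto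
  then show ?case by (simp add: Tg_sum)
qed

lemma Tg_Tg: "Tg q a (Tg q a X) K = q * X K"
proof -
  have "Tg q a (Tg q a X) K = wdg a (wdg a X) K + q * (wdg a (bd X) K + bd (wdg a X) K) + q * q * bd (bd X) K"
    by (simp add: Tg_def wdg_add wdg_smul bd_add bd_smul algebra_simps)
  then show ?thesis by (simp add: wdg_wdg wdg_bd bd_bd)
qed

lemma Tg_anti: assumes "a \<noteq> b" shows "Tg q a (Tg q b X) K + Tg q b (Tg q a X) K = 2 * q * X K"
proof -
  have "Tg q a (Tg q b X) K + Tg q b (Tg q a X) K = (wdg a (wdg b X) K + wdg b (wdg a X) K) + q * (wdg a (bd X) K + bd (wdg a X) K)
     + q * (wdg b (bd X) K + bd (wdg b X) K) + q * q * (bd (bd X) K + bd (bd X) K)"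
    by (simp add: Tg_def wdg_add wdg_smul bd_add bd_smul algebra_simps)
  also have "\<dots> = 0 + q * X K + q * X K + q * q * (0 + 0)"
    by (simp only: wdg_anti[OF assms] wdg_bd bd_bd)
  finally show ?thesis by (simp add: algebra_simps)
qed

definition e0 :: "'a set \<Rightarrow> 'r::comm_ring_1" where "e0 = (\<lambda>K. if K = {} then 1 else 0)"

definition supp :: "('a, 'r::comm_ring_1) falg \<Rightarrow> 'a list set" where "supp f = {w. f w \<noteq> 0}"

definition NF :: "'r::comm_ring_1 \<Rightarrow> ('a::{linorder,finite}, 'r) falg \<Rightarrow> 'a set \<Rightarrow> 'r" where
  "NF q f = (\<lambda>K. \<Sum>v\<in>supp f. f v * act q v e0 K)"

lemma NF_superset: "finite A \<Longrightarrow> supp f \<subseteq> A \<Longrightarrow> NF q f K = (\<Sum>v\<in>A. f v * act q v e0 K)"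
  unfolding NF_def by (rule sum.mono_neutral_left) (auto simp: supp_def)

lemma NF_lin: assumes "finite (supp X)" "finite (supp Y)"
  shows "NF q (\<lambda>w. a * X w + b * Y w) K = a * NF q X K + b * NF q Y K"
proof -
  let ?A = "supp X \<union> supp Y"
  have "NF q (\<lambda>w. a * X w + b * Y w) K = (\<Sum>v\<in>?A. (a * X v + b * Y v) * act q v e0 K)"
    by (rule NF_superset) (use assms in \<open>auto simp: supp_def\<close>)
  also have "\<dots> = a * (\<Sum>v\<in>?A. X v * act q v e0 K) + b * (\<Sum>v\<in>?A. Y v * act q v e0 K)"
    by (simp add: sum.distrib sum_distrib_left algebra_simps)
  also have "\<dots> = a * NF q X K + b * NF q Y K"
    using NF_superset[of ?A X q K] NF_superset[of ?A Y q K] assms by auto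
  finally show ?thesis .
qed

lemma fin_lin: "finite (supp X) \<Longrightarrow> finite (supp Y) \<Longrightarrow> finite (supp (\<lambda>w. a * X w + b * Y w))"
  by (rule finite_subset[of _ "supp X \<union> supp Y"]) (auto simp: supp_def)

lemma fin_mono: "finite (supp (Defs.mono w :: ('a, 'r::comm_ring_1) falg))"
  by (rule finite_subset[of _ "{w}"]) (auto simp: supp_def Defs.mono_def)

lemma NF_mono: "NF q (Defs.mono w) K = act q w e0 K"
  by (subst NF_superset[of "{w}"]) (auto simp: supp_def Defs.mono_def)

lemma fmul_mono_left: "fmul (Defs.mono u) g x = (if take (length u) x = u then g (drop (length u) x) else 0)"
proof -
  have "fmul (Defs.mono u) g x = (\<Sum>i\<in>{..length x}. if i = length u then (if take (length u) x = u then g (drop (length u) x) else 0) else 0)"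
    unfolding fmul_def Defs.mono_def
    by (intro sum.cong refl) (auto)
  also have "\<dots> = (if take (length u) x = u then g (drop (length u) x) else 0)"
  proof (cases "length u \<le> length x")
    case False
    then have "take (length u) x \<noteq> u" by auto
    then show ?thesis by simp
  qed simp
  finally show ?thesis .
qed

lemma fmul_mono_right: "fmul h (Defs.mono v) x = (if length v \<le> length x \<and> drop (length x - length v) x = v then h (take (length x - length v) x) else 0)"
proof -
  have "fmul h (Defs.mono v) x = (\<Sum>i\<in>{..length x}. if i = length x - length v then (if length v \<le> length x \<and> drop (length x - length v) x = v then h (take (length x - length v) x) else 0) else 0)"
    unfolding fmul_def Defs.mono_def
    by (intro sum.cong refl) auto
  also have "\<dots> = (if length v \<le> length x \<and> drop (length x - length v) x = v then h (take (length x - length v) x) else 0)"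
    by simp
  finally show ?thesis .
qed

lemma fmul_mono_mono: "fmul (Defs.mono a) (Defs.mono b) = (Defs.mono (a @ b) :: ('a, 'r::comm_ring_1) falg)"
proof
  fix x :: "'a list"
  have "(take (length a) x = a \<and> drop (length a) x = b) = (x = a @ b)"
    by (metis append_eq_conv_conj)
  then show "fmul (Defs.mono a) (Defs.mono b) x = (Defs.mono (a @ b) :: ('a, 'r) falg) x"
    by (simp only: fmul_mono_left) (auto simp: Defs.mono_def)
qed

lemma NF_lin3: assumes "finite (supp X)" "finite (supp Y)" "finite (supp Z)"
  shows "NF q (\<lambda>w. a * X w + b * Y w + c * Z w) K = a * NF q X K + b * NF q Y K + c * NF q Z K"
proof -
  let ?A = "supp X \<union> supp Y \<union> supp Z"
  have "NF q (\<lambda>w. a * X w + b * Y w + c * Z w) K = (\<Sum>v\<in>?A. (a * X v + b * Y v + c * Z v) * act q v e0 K)"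
    by (rule NF_superset) (use assms in \<open>auto simp: supp_def\<close>)
  also have "\<dots> = a * (\<Sum>v\<in>?A. X v * act q v e0 K) + b * (\<Sum>v\<in>?A. Y v * act q v e0 K) + c * (\<Sum>v\<in>?A. Z v * act q v e0 K)"
    by (simp add: sum.distrib sum_distrib_left algebra_simps)
  also have "\<dots> = a * NF q X K + b * NF q Y K + c * NF q Z K"
  proof -
    have fA: "finite ?A" using assms by simp
    have "NF q X K = (\<Sum>v\<in>?A. X v * act q v e0 K)" by (rule NF_superset[OF fA]) auto
    moreover have "NF q Y K = (\<Sum>v\<in>?A. Y v * act q v e0 K)" by (rule NF_superset[OF fA]) auto
    moreover have "NF q Z K = (\<Sum>v\<in>?A. Z v * act q v e0 K)" by (rule NF_superset[OF fA]) auto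
    ultimately show ?thesis by simp
  qed
  finally show ?thesis .
qed

lemma fmul_left_lin3: "fmul (Defs.mono u) (\<lambda>z. a * A z + b * B z + c * C z) = (\<lambda>z. a * fmul (Defs.mono u) A z + b * fmul (Defs.mono u) B z + c * fmul (Defs.mono u) C z)"
  by (rule ext) (simp add: fmul_mono_left)

lemma fmul_right_lin3: "fmul (\<lambda>z. a * A z + b * B z + c * C z) (Defs.mono v) = (\<lambda>z. a * fmul A (Defs.mono v) z + b * fmul B (Defs.mono v) z + c * fmul C (Defs.mono v) z)"
  by (rule ext) (simp add: fmul_mono_right)

fun ninv :: "'a::linorder list \<Rightarrow> nat" where
  "ninv [] = 0"
| "ninv (a # w) = length (filter (\<lambda>b. b < a) w) + ninv w"

lemma inv_swap: "(y::'a::linorder) < x \<Longrightarrow> ninv (u @ y # x # v) < ninv (u @ x # y # v)"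
proof (induction u)
  case Nil then show ?case by auto
next
  case (Cons a u)
  have "length (filter (\<lambda>b. b < a) (u @ y # x # v)) = length (filter (\<lambda>b. b < a) (u @ x # y # v))" by simp
  then show ?case using Cons by simp
qed

definition rr :: "('a::linorder list \<times> 'a list) set" where
  "rr = inv_image (less_than <*lex*> less_than) (\<lambda>w. (length w, ninv w))"

lemma wf_rr: "wf rr"
  unfolding rr_def by (intro wf_inv_image wf_lex_prod wf_less_than)

lemma not_sorted_pair: "\<not> sorted_wrt (<) w \<Longrightarrow> \<exists>u x y v. w = u @ x # y # v \<and> (y::'a::linorder) \<le> x"
proof (induction w)
  case Nil then show ?case by simp
next
  case (Cons a t)
  show ?case
  proof (cases "sorted_wrt (<) t")
    case True
    then obtain z where z: "z \<in> set t" "z \<le> a" using Cons.prems by (auto simp: not_less)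
    then obtain b t' where t: "t = b # t'" by (cases t) auto
    have "b \<le> z" using z True t by (auto simp: less_imp_le)
    then have "b \<le> a" using z by simp
    then show ?thesis using t by (intro exI[of _ "[]"]) auto
  next
    case False
    then obtain u x y v where "t = u @ x # y # v" "y \<le> x" using Cons.IH by blast
    then show ?thesis by (intro exI[of _ "a # u"]) auto
  qed
qed

lemma lm1: "is_lm (fsub (Defs.mono [x, x]) (smul q (Defs.mono [])) :: ('a::linorder, 'r::comm_ring_1) falg) [x, x]"
  unfolding is_lm_def
proof (intro conjI allI impI)
  show "fsub (Defs.mono [x, x]) (smul q (Defs.mono [])) [x, x] = (1::'r)" by (simp add: fsub_def smul_def Defs.mono_def)
  fix w assume "fsub (Defs.mono [x, x]) (smul q (Defs.mono [])) w \<noteq> (0::'r)"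
  then have "w = [x, x] \<or> w = []" by (simp add: fsub_def smul_def Defs.mono_def split: if_splits)
  then show "w = [x, x] \<or> deglex_less w [x, x]" by (auto simp: deglex_less_def)
qed

lemma lm2: assumes "y < x"
  shows "is_lm (fsub (fadd (Defs.mono [x, y]) (Defs.mono [y, x])) (smul (2 * q) (Defs.mono [])) :: ('a::linorder, 'r::comm_ring_1) falg) [x, y]"
  unfolding is_lm_def
proof (intro conjI allI impI)
  have ne: "[y, x] \<noteq> [x, y]" using assms by simp
  show "fsub (fadd (Defs.mono [x, y]) (Defs.mono [y, x])) (smul (2 * q) (Defs.mono [])) [x, y] = (1::'r)"
    using ne by (simp add: fsub_def fadd_def smul_def Defs.mono_def)
  have dl: "deglex_less [y, x] [x, y]" unfolding deglex_less_def
    by (rule disjI2, rule conjI, simp, rule exI[of _ "[]"], rule exI[of _ y], rule exI[of _ x], rule exI[of _ "[x]"], rule exI[of _ "[y]"]) (simp add: assms)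
  fix w assume "fsub (fadd (Defs.mono [x, y]) (Defs.mono [y, x])) (smul (2 * q) (Defs.mono [])) w \<noteq> (0::'r)"
  then have "w = [x, y] \<or> w = [y, x] \<or> w = []" by (simp add: fsub_def fadd_def smul_def Defs.mono_def split: if_splits)
  moreover have d0: "deglex_less [] [x, y]" by (simp add: deglex_less_def)
  ultimately show "w = [x, y] \<or> deglex_less w [x, y]" using dl by auto
qed

lemma NF_rel1:
  fixes q :: "'r::comm_ring_1"
  shows "NF q (\<lambda>z. 1 * Defs.mono (u @ [x, x] @ v) z + 0 * Defs.mono (u @ v) z + (-q) * Defs.mono (u @ v) z) K = (0::'r)"
proof -
  have TT: "Tg q x (Tg q x (act q v e0)) = (\<lambda>K. q * act q v e0 K)" by (rule ext) (rule Tg_Tg)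
  have "NF q (\<lambda>z. 1 * Defs.mono (u @ [x, x] @ v) z + 0 * Defs.mono (u @ v) z + (-q) * Defs.mono (u @ v) z) K
     = 1 * act q (u @ [x, x] @ v) e0 K + 0 * act q (u @ v) e0 K + (-q) * act q (u @ v) e0 K"
    by (simp only: NF_lin3[OF fin_mono fin_mono fin_mono] NF_mono)
  also have "act q (u @ [x, x] @ v) e0 K = act q u (Tg q x (Tg q x (act q v e0))) K"
    by (simp only: act_append act.simps)
  also have "\<dots> = q * act q u (act q v e0) K" by (simp only: TT act_smul)
  also have "act q (u @ v) e0 K = act q u (act q v e0) K" by (simp only: act_append)
  finally show ?thesis by simp
qed

lemma NF_rel2:
  fixes q :: "'r::comm_ring_1"
  assumes "x \<noteq> y"
  shows "NF q (\<lambda>z. 1 * Defs.mono (u @ [x, y] @ v) z + 1 * Defs.mono (u @ [y, x] @ v) z + (- (2 * q)) * Defs.mono (u @ v) z) K = (0::'r)"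
proof -
  let ?Z = "act q v e0"
  have TT: "(\<lambda>K. Tg q x (Tg q y ?Z) K + Tg q y (Tg q x ?Z) K) = (\<lambda>K. (2 * q) * ?Z K)"
    by (rule ext) (rule Tg_anti[OF assms])
  have "NF q (\<lambda>z. 1 * Defs.mono (u @ [x, y] @ v) z + 1 * Defs.mono (u @ [y, x] @ v) z + (- (2 * q)) * Defs.mono (u @ v) z) K
     = 1 * act q (u @ [x, y] @ v) e0 K + 1 * act q (u @ [y, x] @ v) e0 K + (- (2 * q)) * act q (u @ v) e0 K"
    by (simp only: NF_lin3[OF fin_mono fin_mono fin_mono] NF_mono)
  also have "act q (u @ [x, y] @ v) e0 K = act q u (Tg q x (Tg q y ?Z)) K"
    by (simp only: act_append act.simps)
  also have "act q (u @ [y, x] @ v) e0 K = act q u (Tg q y (Tg q x ?Z)) K"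
    by (simp only: act_append act.simps)
  also have "act q (u @ v) e0 K = act q u ?Z K" by (simp only: act_append)
  also have "1 * act q u (Tg q x (Tg q y ?Z)) K + 1 * act q u (Tg q y (Tg q x ?Z)) K = act q u (\<lambda>K. Tg q x (Tg q y ?Z) K + Tg q y (Tg q x ?Z) K) K"
    by (simp only: act_add mult_1_left)
  also have "\<dots> = (2 * q) * act q u ?Z K" by (simp only: TT act_smul)
  finally show ?thesis by simp
qed

lemma fin_lin3: "finite (supp X) \<Longrightarrow> finite (supp Y) \<Longrightarrow> finite (supp Z) \<Longrightarrow> finite (supp (\<lambda>w. a * X w + b * Y w + c * Z w))"
  by (rule finite_subset[of _ "supp X \<union> supp Y \<union> supp Z"]) (auto simp: supp_def)

lemma step_data:
  fixes q :: "'r::comm_ring_1"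
  assumes "\<not> sorted_wrt (<) (w::'a::{linorder,finite} list)"
  shows "\<exists>g m u v. g \<in> Gq q \<and> is_lm g m \<and> w = u @ m @ v \<and>
     finite (supp (fmul (fmul (Defs.mono u) g) (Defs.mono v))) \<and>
     (\<forall>K. NF q (fmul (fmul (Defs.mono u) g) (Defs.mono v)) K = 0) \<and>
     fmul (fmul (Defs.mono u) g) (Defs.mono v) w = 1 \<and>
     (\<forall>z. fmul (fmul (Defs.mono u) g) (Defs.mono v) z \<noteq> 0 \<longrightarrow> z = w \<or> (z, w) \<in> rr)"
proof -
  obtain u x y v where w: "w = u @ x # y # v" and yx: "y \<le> x" using not_sorted_pair[OF assms] by blast
  let ?Z = "act q v e0"
  show ?thesis
  proof (cases "x = y")
    case True
    define g :: "('a, 'r) falg" where "g = fsub (Defs.mono [x, x]) (smul q (Defs.mono []))"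
    have gl: "g = (\<lambda>z. 1 * Defs.mono [x, x] z + 0 * Defs.mono [] z + (-q) * Defs.mono [] z)"
      by (rule ext) (simp add: g_def fsub_def smul_def)
    have G: "fmul (fmul (Defs.mono u) g) (Defs.mono v) = (\<lambda>z. 1 * Defs.mono (u @ [x, x] @ v) z + 0 * Defs.mono (u @ v) z + (-q) * Defs.mono (u @ v) z)"
      unfolding gl fmul_left_lin3 fmul_right_lin3 fmul_mono_mono by simp
    have gG: "g \<in> Gq q" unfolding g_def Gq_def by (rule UnI1, rule CollectI, rule exI[of _ x], simp)
    have lm: "is_lm g [x, x]" unfolding g_def by (rule lm1)
    have NF0: "\<forall>K. NF q (fmul (fmul (Defs.mono u) g) (Defs.mono v)) K = 0"
      unfolding G by (intro allI NF_rel1)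
    have fin: "finite (supp (fmul (fmul (Defs.mono u) g) (Defs.mono v)))"
      unfolding G by (intro fin_lin3 fin_mono)
    have ww: "w = u @ [x, x] @ v" using w True by simp
    have Gw: "fmul (fmul (Defs.mono u) g) (Defs.mono v) w = 1"
      unfolding G ww by (simp add: Defs.mono_def)
    have Gz: "\<forall>z. fmul (fmul (Defs.mono u) g) (Defs.mono v) z \<noteq> 0 \<longrightarrow> z = w \<or> (z, w) \<in> rr"
    proof (intro allI impI)
      fix z assume "fmul (fmul (Defs.mono u) g) (Defs.mono v) z \<noteq> 0"
      then have "z = w \<or> z = u @ v" unfolding G ww by (simp add: Defs.mono_def split: if_splits)
      then show "z = w \<or> (z, w) \<in> rr" unfolding ww rr_def by auto
    qed
    show ?thesis
      apply (rule exI[of _ g], rule exI[of _ "[x, x]"], rule exI[of _ u], rule exI[of _ v])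
      using gG lm ww fin NF0 Gw Gz by simp
  next
    case False
    then have yx': "y < x" using yx by simp
    define g :: "('a, 'r) falg" where "g = fsub (fadd (Defs.mono [x, y]) (Defs.mono [y, x])) (smul (2 * q) (Defs.mono []))"
    have gl: "g = (\<lambda>z. 1 * Defs.mono [x, y] z + 1 * Defs.mono [y, x] z + (- (2 * q)) * Defs.mono [] z)"
      by (rule ext) (simp add: g_def fsub_def fadd_def smul_def)
    have G: "fmul (fmul (Defs.mono u) g) (Defs.mono v) = (\<lambda>z. 1 * Defs.mono (u @ [x, y] @ v) z + 1 * Defs.mono (u @ [y, x] @ v) z + (- (2 * q)) * Defs.mono (u @ v) z)"
      unfolding gl fmul_left_lin3 fmul_right_lin3 fmul_mono_mono by simp
    have gG: "g \<in> Gq q" unfolding g_def Gq_def by (rule UnI2, rule CollectI, rule exI[of _ x], rule exI[of _ y], simp add: yx')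
    have lm: "is_lm g [x, y]" unfolding g_def by (rule lm2[OF yx'])
    have NF0: "\<forall>K. NF q (fmul (fmul (Defs.mono u) g) (Defs.mono v)) K = 0"
      unfolding G using False by (intro allI NF_rel2) auto
    have fin: "finite (supp (fmul (fmul (Defs.mono u) g) (Defs.mono v)))"
      unfolding G by (intro fin_lin3 fin_mono)
    have r1: "(u @ [y, x] @ v, u @ [x, y] @ v) \<in> rr" using inv_swap[OF yx', of u v] by (simp add: rr_def)
    have ww: "w = u @ [x, y] @ v" using w by simp
    have ne: "u @ [y, x] @ v \<noteq> u @ [x, y] @ v" using yx' by simp
    have Gw: "fmul (fmul (Defs.mono u) g) (Defs.mono v) w = 1"
      unfolding G ww using ne by (simp add: Defs.mono_def)
    have Gz: "\<forall>z. fmul (fmul (Defs.mono u) g) (Defs.mono v) z \<noteq> 0 \<longrightarrow> z = w \<or> (z, w) \<in> rr"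
    proof (intro allI impI)
      fix z assume "fmul (fmul (Defs.mono u) g) (Defs.mono v) z \<noteq> 0"
      then have "z = w \<or> z = u @ [y, x] @ v \<or> z = u @ v" unfolding G ww by (simp add: Defs.mono_def split: if_splits)
      then show "z = w \<or> (z, w) \<in> rr" using r1 unfolding ww by (auto simp: rr_def)
    qed
    show ?thesis
      apply (rule exI[of _ g], rule exI[of _ "[x, y]"], rule exI[of _ u], rule exI[of _ v])
      using gG lm ww fin NF0 Gw Gz by simp
  qed
qed

definition bad :: "('a::linorder, 'r::comm_ring_1) falg \<Rightarrow> 'a list set" where
  "bad f = {w. f w \<noteq> 0 \<and> \<not> sorted_wrt (<) w}"

lemma reduce_nf_aux:
  fixes q :: "'r::comm_ring_1"
  shows "\<And>f::('a::{linorder,finite}, 'r) falg. mset_set (bad f) = M \<Longrightarrow> finite (supp f) \<Longrightarrow>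
     \<exists>h. reduces (Gq q) f h \<and> (\<forall>w. h w \<noteq> 0 \<longrightarrow> sorted_wrt (<) w) \<and> finite (supp h) \<and> NF q h = NF q f"
proof (induction M rule: wf_induct_rule[OF wf_mult[OF wf_rr]])
  case (1 M f)
  show ?case
  proof (cases "bad f = {}")
    case True
    then show ?thesis using 1(3) unfolding reduces_def by (intro exI[of _ f]) (auto simp: bad_def)
  next
    case False
    then obtain w where wb: "w \<in> bad f" by blast
    then have fw: "f w \<noteq> 0" and ns: "\<not> sorted_wrt (<) w" by (auto simp: bad_def)
    obtain g m u v where gG: "g \<in> Gq q" and lm: "is_lm g m" and wum: "w = u @ m @ v"
      and finG: "finite (supp (fmul (fmul (Defs.mono u) g) (Defs.mono v)))"
      and NFG: "\<And>K. NF q (fmul (fmul (Defs.mono u) g) (Defs.mono v)) K = 0"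
      and Gw: "fmul (fmul (Defs.mono u) g) (Defs.mono v) w = 1"
      and Gz: "\<And>z. fmul (fmul (Defs.mono u) g) (Defs.mono v) z \<noteq> 0 \<Longrightarrow> z = w \<or> (z, w) \<in> rr"
      using step_data[OF ns, of q] by blast
    define G where "G = fmul (fmul (Defs.mono u) g) (Defs.mono v)"
    define h' where "h' = fsub f (smul (f w) G)"
    have h'l: "h' = (\<lambda>z. 1 * f z + (- f w) * G z)" by (rule ext) (simp add: h'_def fsub_def smul_def)
    have red: "red_step (Gq q) f h'"
      unfolding red_step_def h'_def G_def using gG lm fw wum by blast
    have finh: "finite (supp h')" unfolding h'l by (rule fin_lin) (use 1(3) finG G_def in auto)
    have NFh: "NF q h' = NF q f"
    proof
      fix K show "NF q h' K = NF q f K"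
        unfolding h'l using NF_lin[OF 1(3) finG, of q 1 "- f w" K] NFG G_def by simp
    qed
    have h'w: "h' w = 0" using Gw by (simp add: h'l G_def)
    have finb: "finite (bad f)" "finite (bad h')"
      using 1(3) finh by (auto intro: finite_subset[rotated] simp: bad_def supp_def)
    let ?A = "bad h' \<inter> bad f" and ?B = "bad f - bad h'" and ?C = "bad h' - bad f"
    have e1: "mset_set (bad h') = mset_set ?A + mset_set ?C"
      using finb by (subst mset_set_Union[symmetric]) (auto intro: arg_cong[where f=mset_set])
    have e2: "mset_set (bad f) = mset_set ?A + mset_set ?B"
      using finb by (subst mset_set_Union[symmetric]) (auto intro: arg_cong[where f=mset_set])
    have wB: "w \<in> ?B" using wb h'w by (auto simp: bad_def)
    have "(mset_set ?A + mset_set ?C, mset_set ?A + mset_set ?B) \<in> mult rr"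
    proof (rule one_step_implies_mult)
      show "mset_set ?B \<noteq> {#}" using wB finb by (auto simp: mset_set_empty_iff)
      show "\<forall>k\<in>set_mset (mset_set ?C). \<exists>j\<in>set_mset (mset_set ?B). (k, j) \<in> rr"
      proof
        fix k assume "k \<in> set_mset (mset_set ?C)"
        then have k: "k \<in> ?C" using finb by simp
        then have "h' k \<noteq> 0" "f k = 0" by (auto simp: bad_def)
        then have "G k \<noteq> 0" by (auto simp: h'l)
        then have "k = w \<or> (k, w) \<in> rr" using Gz G_def by blast
        moreover have "k \<noteq> w" using k h'w by (auto simp: bad_def)
        ultimately show "\<exists>j\<in>set_mset (mset_set ?B). (k, j) \<in> rr" using wB finb by auto
      qed
    qed
    then have "(mset_set (bad h'), M) \<in> mult rr" using e1 e2 1(2) by simp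
    from 1(1)[OF this refl finh] obtain h where h: "reduces (Gq q) h' h" "\<forall>w. h w \<noteq> 0 \<longrightarrow> sorted_wrt (<) w"
      "finite (supp h)" "NF q h = NF q h'" by blast
    have "reduces (Gq q) f h" using red h(1) unfolding reduces_def by (rule converse_rtranclp_into_rtranclp)
    then show ?thesis using h NFh by auto
  qed
qed

lemma reduce_nf:
  fixes q :: "'r::comm_ring_1" and f :: "('a::{linorder,finite}, 'r) falg"
  assumes "finite (supp f)"
  shows "\<exists>h. reduces (Gq q) f h \<and> (\<forall>w. h w \<noteq> 0 \<longrightarrow> sorted_wrt (<) w) \<and> finite (supp h) \<and> NF q h = NF q f"
  using reduce_nf_aux[OF refl assms] .

lemma act_norm:
  fixes q :: "'r::comm_ring_1"
  shows "sorted_wrt (<) (w::'a::{linorder,finite} list) \<Longrightarrow>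
    act q w e0 (set w) = (1::'r) \<and> (\<forall>K. act q w e0 K \<noteq> (0::'r) \<longrightarrow> K = set w \<or> card K < length w)"
proof (induction w)
  case Nil then show ?case by (simp add: e0_def)
next
  case (Cons a w')
  let ?Z = "act q w' e0"
  have sw: "sorted_wrt (<) w'" and al: "\<forall>y\<in>set w'. a < y" using Cons.prems by auto
  have aw: "a \<notin> set w'" using al by auto
  have IH1: "?Z (set w') = 1" and IH2: "\<And>K. ?Z K \<noteq> 0 \<Longrightarrow> K = set w' \<or> card K < length w'"
    using Cons.IH[OF sw] by auto
  have dw': "distinct w'" using sw strict_sorted_iff by blast
  have cw': "card (set w') = length w'" using distinct_card[OF dw'] .
  have act: "act q (a # w') e0 K = wdg a ?Z K + q * bd ?Z K" for K by (simp add: Tg_def)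
  have bd0: "bd ?Z (insert a (set w')) = 0"
    unfolding bd_def
  proof (rule sum.neutral, rule ballI)
    fix k assume k: "k \<in> - insert a (set w')"
    have "?Z (insert k (insert a (set w'))) = 0"
    proof (rule ccontr)
      assume "?Z (insert k (insert a (set w'))) \<noteq> 0"
      from IH2[OF this] show False
      proof
        assume "insert k (insert a (set w')) = set w'" then show False using aw by auto
      next
        have "card (insert k (insert a (set w'))) = length w' + 2" using k aw cw' by simp
        then show "card (insert k (insert a (set w'))) < length w' \<Longrightarrow> False" by simp
      qed
    qed
    then show "sg (insert a (set w')) k * ?Z (insert k (insert a (set w'))) = 0" by simp
  qed
  have sga: "sg (insert a (set w')) a = (1::'r)"
  proof -
    have e: "{k \<in> insert a (set w'). k < a} = {}" using al by auto
    show ?thesis unfolding sg_def e by simp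
  qed
  have p1: "act q (a # w') e0 (set (a # w')) = 1"
    using act[of "insert a (set w')"] bd0 sga IH1 aw by (simp add: wdg_def)
  have p2: "act q (a # w') e0 K \<noteq> 0 \<Longrightarrow> K = set (a # w') \<or> card K < length (a # w')" for K
  proof -
    assume ne: "act q (a # w') e0 K \<noteq> 0"
    then have "wdg a ?Z K \<noteq> 0 \<or> bd ?Z K \<noteq> 0" using act[of K] by auto
    then show ?thesis
    proof
      assume "wdg a ?Z K \<noteq> 0"
      then have aK: "a \<in> K" and z: "?Z (K - {a}) \<noteq> 0" by (auto simp: wdg_def split: if_splits)
      have cK: "card K = Suc (card (K - {a}))" using aK by (metis card_Suc_Diff1 finite)
      from IH2[OF z] show ?thesis
      proof
        assume "K - {a} = set w'" then have "K = set (a # w')" using aK by auto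
        then show ?thesis ..
      next
        assume "card (K - {a}) < length w'" then show ?thesis using cK by simp
      qed
    next
      assume "bd ?Z K \<noteq> 0"
      then obtain k where k: "k \<in> -K" and z: "?Z (insert k K) \<noteq> 0"
        unfolding bd_def by (metis (no_types, lifting) mult_zero_right sum.neutral)
      have cK: "card (insert k K) = Suc (card K)" using k by simp
      from IH2[OF z] show ?thesis
      proof
        assume "insert k K = set w'" then have "card (insert k K) = length w'" using cw' by simp
        then show ?thesis using cK by simp
      next
        assume "card (insert k K) < length w'" then show ?thesis using cK by simp
      qed
    qed
  qed
  show ?case using p1 p2 by blast
qed

lemma NF_inj0:
  fixes q :: "'r::comm_ring_1" and h :: "('a::{linorder,finite}, 'r) falg"
  assumes fin: "finite (supp h)" and nrm: "\<forall>w. h w \<noteq> 0 \<longrightarrow> sorted_wrt (<) w" and z: "\<And>K. NF q h K = 0"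
  shows "h = (\<lambda>w. 0)"
proof (rule ccontr)
  assume "h \<noteq> (\<lambda>w. 0)"
  then have ne: "supp h \<noteq> {}" by (auto simp: supp_def)
  define n where "n = Max (length ` supp h)"
  have "n \<in> length ` supp h" unfolding n_def using fin ne by (intro Max_in) auto
  then obtain w where w: "w \<in> supp h" "length w = n" by auto
  have le: "\<And>v. v \<in> supp h \<Longrightarrow> length v \<le> n" unfolding n_def using fin by (intro Max_ge) auto
  have sw: "sorted_wrt (<) w" using nrm w(1) by (auto simp: supp_def)
  have cw: "card (set w) = length w" using sw by (simp add: strict_sorted_iff distinct_card)
  have "NF q h (set w) = h w * act q w e0 (set w) + (\<Sum>v\<in>supp h - {w}. h v * act q v e0 (set w))"
    unfolding NF_def using fin w(1) by (rule sum.remove)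
  also have "(\<Sum>v\<in>supp h - {w}. h v * act q v e0 (set w)) = 0"
  proof (rule sum.neutral, rule ballI)
    fix v assume v: "v \<in> supp h - {w}"
    have sv: "sorted_wrt (<) v" using nrm v by (auto simp: supp_def)
    have "act q v e0 (set w) = 0"
    proof (rule ccontr)
      assume "act q v e0 (set w) \<noteq> 0"
      then have "set w = set v \<or> card (set w) < length v" using act_norm[OF sv, of q] by blast
      then show False
      proof
        assume "set w = set v"
        then have "w = v" using sw sv by (simp add: strict_sorted_iff sorted_distinct_set_unique)
        then show False using v by simp
      next
        assume "card (set w) < length v" then show False using le[of v] v cw w(2) by simp
      qed
    qed
    then show "h v * act q v e0 (set w) = 0" by simp
  qed
  finally have "NF q h (set w) = h w" using act_norm[OF sw, of q] by simp
  then show False using z w(1) by (simp add: supp_def)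
qed

lemma NF_inj:
  fixes q :: "'r::comm_ring_1" and h1 h2 :: "('a::{linorder,finite}, 'r) falg"
  assumes "finite (supp h1)" "finite (supp h2)" "\<forall>w. h1 w \<noteq> 0 \<longrightarrow> sorted_wrt (<) w" "\<forall>w. h2 w \<noteq> 0 \<longrightarrow> sorted_wrt (<) w"
    "\<And>K. NF q h1 K = NF q h2 K"
  shows "h1 = h2"
proof -
  let ?d = "\<lambda>w. 1 * h1 w + (-1) * h2 w"
  have d0: "?d = (\<lambda>w. 0)"
  proof (rule NF_inj0[of _ q])
    show "finite (supp ?d)" by (rule fin_lin) (use assms in auto)
    show "\<forall>w. ?d w \<noteq> 0 \<longrightarrow> sorted_wrt (<) w" using assms(3,4) by force
    show "NF q ?d K = 0" for K using NF_lin[OF assms(1,2), of q 1 "-1" K] assms(5) by simp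
  qed
  show ?thesis
  proof
    fix w have "?d w = 0" using d0 by (rule fun_cong)
    then show "h1 w = h2 w" by simp
  qed
qed

lemma sl_insert_min:
  assumes "finite A" "\<forall>x\<in>A. (j::'a::linorder) < x"
  shows "sorted_list_of_set (insert j A) = j # sorted_list_of_set A"
proof -
  have "j \<notin> A" using assms(2) by auto
  then have "A - {j} = A" by auto
  then have "sorted_list_of_set (insert j A) = insort j (sorted_list_of_set A)"
    using sorted_list_of_set_insert_remove[OF assms(1), of j] by simp
  also have "\<dots> = j # sorted_list_of_set A"
    by (rule insort_is_Cons) (use assms in \<open>auto simp: less_imp_le\<close>)
  finally show ?thesis .
qed

lemma sum_Pow_insert:
  assumes "j \<notin> A" "finite A"
  shows "(\<Sum>I\<in>Pow (insert j A). F I) = (\<Sum>I\<in>Pow A. F I) + (\<Sum>I\<in>Pow A. F (insert j I))"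
proof -
  have d: "Pow A \<inter> insert j ` Pow A = {}" using assms(1) by auto
  have i: "inj_on (insert j) (Pow A)" using assms(1) unfolding inj_on_def by (auto simp: insert_ident)
  show ?thesis unfolding Pow_insert using assms(2)
    by (simp add: sum.union_disjoint[OF _ _ d] sum.reindex[OF i])
qed

lemma tau_plus_Pow: "tau_plus q J w = (\<Sum>I\<in>Pow J. if even (card I) then (-1) ^ ell J I * (-q) ^ (card I div 2) * tset (J - I) w else 0)"
proof -
  have e: "{I. I \<subseteq> J \<and> even (card I)} = {I \<in> Pow J. even (card I)}" by auto
  show ?thesis unfolding tau_plus_def e by (rule sum.inter_filter) simp
qed

lemma tau_minus_Pow: "tau_minus q J w = (\<Sum>I\<in>Pow J. if odd (card I) then (-1) ^ ell J I * (-q) ^ ((card I - 1) div 2) * tset (J - I) w else 0)"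
proof -
  have e: "{I. I \<subseteq> J \<and> odd (card I)} = {I \<in> Pow J. odd (card I)}" by auto
  show ?thesis unfolding tau_minus_def e by (rule sum.inter_filter) simp
qed

lemma nu_bound:
  assumes "I \<subseteq> J0" "\<nu> < card I"
  shows "\<nu> \<le> card {y \<in> (J0::'a::{linorder,finite} set). y < sorted_list_of_set I ! \<nu>}"
proof -
  let ?l = "sorted_list_of_set I"
  have len: "length ?l = card I" by simp
  have ss: "sorted_wrt (<) ?l" by (simp add: strict_sorted_iff)
  have "(!) ?l ` {..<\<nu>} \<subseteq> {y \<in> J0. y < ?l ! \<nu>}"
  proof
    fix y assume "y \<in> (!) ?l ` {..<\<nu>}"
    then obtain i where i: "i < \<nu>" "y = ?l ! i" by auto
    have "i < length ?l" using i assms len by simp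
    then have "y \<in> set ?l" using i(2) by (metis nth_mem)
    then have "y \<in> J0" using assms by auto
    moreover have "y < ?l ! \<nu>" using sorted_wrt_nth_less[OF ss i(1)] assms len i by simp
    ultimately show "y \<in> {y \<in> J0. y < ?l ! \<nu>}" by simp
  qed
  moreover have "card ((!) ?l ` {..<\<nu>}) = \<nu>"
    by (subst card_image) (use assms len in \<open>auto intro!: inj_on_nth\<close>)
  ultimately show ?thesis by (metis card_mono finite)
qed

lemma ell_ins_ins:
  assumes "I0 \<subseteq> J0" "\<forall>x\<in>J0. (j::'a::{linorder,finite}) < x"
  shows "ell (insert j J0) (insert j I0) = ell J0 I0"
proof -
  have jI: "j \<notin> I0" using assms by auto
  have c: "card (insert j I0) = Suc (card I0)" using jI by simp
  have sl: "sorted_list_of_set (insert j I0) = j # sorted_list_of_set I0"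
    by (rule sl_insert_min) (use assms in auto)
  have t0: "card {y \<in> insert j J0. y < j} = 0"
  proof -
    have "{y \<in> insert j J0. y < j} = {}" using assms(2) by auto
    then show ?thesis by simp
  qed
  have ts: "card {y \<in> insert j J0. y < sorted_list_of_set I0 ! \<nu>} - Suc \<nu> = card {y \<in> J0. y < sorted_list_of_set I0 ! \<nu>} - \<nu>"
    if "\<nu> < card I0" for \<nu>
  proof -
    let ?x = "sorted_list_of_set I0 ! \<nu>"
    have "?x \<in> I0" using that by (metis finite length_sorted_list_of_set nth_mem set_sorted_list_of_set)
    then have "j < ?x" using assms by auto
    then have "{y \<in> insert j J0. y < ?x} = insert j {y \<in> J0. y < ?x}" by auto
    moreover have "j \<notin> {y \<in> J0. y < ?x}" using assms(2) by auto
    ultimately have "card {y \<in> insert j J0. y < ?x} = Suc (card {y \<in> J0. y < ?x})" by simp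
    then show ?thesis by simp
  qed
  have "ell (insert j J0) (insert j I0) = (card {y \<in> insert j J0. y < j} - 0) + (\<Sum>\<nu><card I0. card {y \<in> insert j J0. y < sorted_list_of_set I0 ! \<nu>} - Suc \<nu>)"
    unfolding ell_def c sl sum.lessThan_Suc_shift by (simp only: nth_Cons_0 nth_Cons_Suc)
  also have "(\<Sum>\<nu><card I0. card {y \<in> insert j J0. y < sorted_list_of_set I0 ! \<nu>} - Suc \<nu>) = (\<Sum>\<nu><card I0. card {y \<in> J0. y < sorted_list_of_set I0 ! \<nu>} - \<nu>)"
    by (rule sum.cong[OF refl]) (rule ts, simp)
  finally show ?thesis using t0 by (simp add: ell_def)
qed

lemma ell_ins:
  assumes "I \<subseteq> J0" "\<forall>x\<in>J0. (j::'a::{linorder,finite}) < x"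
  shows "ell (insert j J0) I = ell J0 I + card I"
proof -
  have ts: "card {y \<in> insert j J0. y < sorted_list_of_set I ! \<nu>} - \<nu> = (card {y \<in> J0. y < sorted_list_of_set I ! \<nu>} - \<nu>) + 1"
    if "\<nu> < card I" for \<nu>
  proof -
    let ?x = "sorted_list_of_set I ! \<nu>"
    have "?x \<in> I" using that by (metis finite length_sorted_list_of_set nth_mem set_sorted_list_of_set)
    then have "j < ?x" using assms by auto
    then have "{y \<in> insert j J0. y < ?x} = insert j {y \<in> J0. y < ?x}" by auto
    moreover have "j \<notin> {y \<in> J0. y < ?x}" using assms(2) by auto
    ultimately have "card {y \<in> insert j J0. y < ?x} = Suc (card {y \<in> J0. y < ?x})" by simp
    then show ?thesis using nu_bound[OF assms(1) that] by simp
  qed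
  have "ell (insert j J0) I = (\<Sum>\<nu><card I. (card {y \<in> J0. y < sorted_list_of_set I ! \<nu>} - \<nu>) + 1)"
    unfolding ell_def by (rule sum.cong[OF refl]) (rule ts, simp)
  also have "\<dots> = (\<Sum>\<nu><card I. card {y \<in> J0. y < sorted_list_of_set I ! \<nu>} - \<nu>) + (\<Sum>\<nu><card I. 1)"
    by (rule sum.distrib)
  finally show ?thesis by (simp add: ell_def)
qed

lemma mono_Cons: "Defs.mono (j # L) w = (if take 1 w = [j] then Defs.mono L (drop 1 w) else (0::'r::comm_ring_1))"
  by (cases w) (auto simp: Defs.mono_def)

lemma fmul_gen: "fmul (gen j) Y w = (if take 1 w = [j] then Y (drop 1 w) else 0)"
  unfolding gen_def by (simp add: fmul_mono_left)

lemma tset_ins: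
  assumes "\<forall>x\<in>J0. (j::'a::{linorder,finite}) < x" "I \<subseteq> J0"
  shows "tset (insert j J0 - I) w = (if take 1 w = [j] then tset (J0 - I) (drop 1 w) else (0::'r::comm_ring_1))"
proof -
  have "insert j J0 - I = insert j (J0 - I)" using assms by auto
  moreover have "sorted_list_of_set (insert j (J0 - I)) = j # sorted_list_of_set (J0 - I)"
    by (rule sl_insert_min) (use assms in auto)
  ultimately show ?thesis unfolding tset_def by (simp add: mono_Cons)
qed

lemma odd_div: "odd (n::nat) \<Longrightarrow> Suc n div 2 = Suc ((n - 1) div 2)"
  by (elim oddE) simp

lemma tau_plus_rec:
  fixes q :: "'r::comm_ring_1"
  assumes "\<forall>x\<in>J0. (j::'a::{linorder,finite}) < x"
  shows "tau_plus q (insert j J0) w = fmul (gen j) (tau_plus q J0) w - q * tau_minus q J0 w"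
proof -
  have jJ: "j \<notin> J0" using assms by auto
  let ?F = "\<lambda>I. if even (card I) then (-1) ^ ell (insert j J0) I * (-q) ^ (card I div 2) * tset (insert j J0 - I) w else (0::'r)"
  have "tau_plus q (insert j J0) w = (\<Sum>I\<in>Pow J0. ?F I) + (\<Sum>I\<in>Pow J0. ?F (insert j I))"
    unfolding tau_plus_Pow by (rule sum_Pow_insert[OF jJ]) simp
  also have "(\<Sum>I\<in>Pow J0. ?F I) = fmul (gen j) (tau_plus q J0) w"
  proof -
    have "(\<Sum>I\<in>Pow J0. ?F I) = (\<Sum>I\<in>Pow J0. if take 1 w = [j] then (if even (card I) then (-1) ^ ell J0 I * (-q) ^ (card I div 2) * tset (J0 - I) (drop 1 w) else 0) else 0)"
    proof (rule sum.cong[OF refl])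
      fix I assume I: "I \<in> Pow J0"
      have e2: "tset (insert j J0 - I) w = (if take 1 w = [j] then tset (J0 - I) (drop 1 w) else (0::'r))"
        by (rule tset_ins[OF assms]) (use I in auto)
      have e3: "ell (insert j J0) I = ell J0 I + card I" using ell_ins[OF _ assms] I by auto
      show "?F I = (if take 1 w = [j] then (if even (card I) then (-1) ^ ell J0 I * (-q) ^ (card I div 2) * tset (J0 - I) (drop 1 w) else 0) else 0)"
        using e2 e3 by (auto simp: power_add)
    qed
    also have "\<dots> = fmul (gen j) (tau_plus q J0) w"
      unfolding fmul_gen tau_plus_Pow by (cases "take 1 w = [j]") simp_all
    finally show ?thesis .
  qed
  also have "(\<Sum>I\<in>Pow J0. ?F (insert j I)) = - q * tau_minus q J0 w"
  proof -
    have "(\<Sum>I\<in>Pow J0. ?F (insert j I)) = (\<Sum>I\<in>Pow J0. (-q) * (if odd (card I) then (-1) ^ ell J0 I * (-q) ^ ((card I - 1) div 2) * tset (J0 - I) w else 0))"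
    proof (rule sum.cong[OF refl])
      fix I assume I: "I \<in> Pow J0"
      have jI: "j \<notin> I" using I jJ by auto
      have c: "card (insert j I) = Suc (card I)" using jI by simp
      have e1: "insert j J0 - insert j I = J0 - I" using jJ by auto
      have e3: "ell (insert j J0) (insert j I) = ell J0 I" using ell_ins_ins[OF _ assms] I by auto
      show "?F (insert j I) = (-q) * (if odd (card I) then (-1) ^ ell J0 I * (-q) ^ ((card I - 1) div 2) * tset (J0 - I) w else 0)"
        using c e1 e3 odd_div[of "card I"] by (auto simp: algebra_simps)
    qed
    also have "\<dots> = - q * tau_minus q J0 w" unfolding tau_minus_Pow by (simp add: sum_distrib_left)
    finally show ?thesis .
  qed
  finally show ?thesis by simp
qed

lemma tau_minus_rec:
  fixes q :: "'r::comm_ring_1"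
  assumes "\<forall>x\<in>J0. (j::'a::{linorder,finite}) < x"
  shows "tau_minus q (insert j J0) w = tau_plus q J0 w - fmul (gen j) (tau_minus q J0) w"
proof -
  have jJ: "j \<notin> J0" using assms by auto
  let ?F = "\<lambda>I. if odd (card I) then (-1) ^ ell (insert j J0) I * (-q) ^ ((card I - 1) div 2) * tset (insert j J0 - I) w else (0::'r)"
  have "tau_minus q (insert j J0) w = (\<Sum>I\<in>Pow J0. ?F I) + (\<Sum>I\<in>Pow J0. ?F (insert j I))"
    unfolding tau_minus_Pow by (rule sum_Pow_insert[OF jJ]) simp
  also have "(\<Sum>I\<in>Pow J0. ?F I) = - fmul (gen j) (tau_minus q J0) w"
  proof -
    have "(\<Sum>I\<in>Pow J0. ?F I) = (\<Sum>I\<in>Pow J0. - (if take 1 w = [j] then (if odd (card I) then (-1) ^ ell J0 I * (-q) ^ ((card I - 1) div 2) * tset (J0 - I) (drop 1 w) else 0) else 0))"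
    proof (rule sum.cong[OF refl])
      fix I assume I: "I \<in> Pow J0"
      have e2: "tset (insert j J0 - I) w = (if take 1 w = [j] then tset (J0 - I) (drop 1 w) else (0::'r))"
        by (rule tset_ins[OF assms]) (use I in auto)
      have e3: "ell (insert j J0) I = ell J0 I + card I" using ell_ins[OF _ assms] I by auto
      show "?F I = - (if take 1 w = [j] then (if odd (card I) then (-1) ^ ell J0 I * (-q) ^ ((card I - 1) div 2) * tset (J0 - I) (drop 1 w) else 0) else 0)"
        using e2 e3 by (auto simp: power_add)
    qed
    also have "\<dots> = - fmul (gen j) (tau_minus q J0) w"
      unfolding fmul_gen tau_minus_Pow by (cases "take 1 w = [j]") (simp_all add: sum_negf)
    finally show ?thesis .
  qed
  also have "(\<Sum>I\<in>Pow J0. ?F (insert j I)) = tau_plus q J0 w"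
  proof -
    have "(\<Sum>I\<in>Pow J0. ?F (insert j I)) = (\<Sum>I\<in>Pow J0. (if even (card I) then (-1) ^ ell J0 I * (-q) ^ (card I div 2) * tset (J0 - I) w else 0))"
    proof (rule sum.cong[OF refl])
      fix I assume I: "I \<in> Pow J0"
      have jI: "j \<notin> I" using I jJ by auto
      have c: "card (insert j I) = Suc (card I)" using jI by simp
      have e1: "insert j J0 - insert j I = J0 - I" using jJ by auto
      have e3: "ell (insert j J0) (insert j I) = ell J0 I" using ell_ins_ins[OF _ assms] I by auto
      show "?F (insert j I) = (if even (card I) then (-1) ^ ell J0 I * (-q) ^ (card I div 2) * tset (J0 - I) w else 0)"
        using c e1 e3 by auto
    qed
    also have "\<dots> = tau_plus q J0 w" unfolding tau_plus_Pow ..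
    finally show ?thesis .
  qed
  finally show ?thesis by simp
qed

definition eJ :: "'a set \<Rightarrow> 'a set \<Rightarrow> 'r::comm_ring_1" where "eJ J = (\<lambda>K. if K = J then 1 else 0)"

definition okf :: "('a::linorder, 'r::comm_ring_1) falg \<Rightarrow> bool" where
  "okf f \<longleftrightarrow> (\<forall>w. f w \<noteq> 0 \<longrightarrow> w \<in> range sorted_list_of_set)"

lemma okf_fin: "okf (f :: ('a::{linorder,finite}, 'r::comm_ring_1) falg) \<Longrightarrow> finite (supp f)"
  unfolding okf_def supp_def by (rule finite_subset[of _ "range sorted_list_of_set"]) auto

lemma okf_nrm: "okf (f :: ('a::{linorder,finite}, 'r::comm_ring_1) falg) \<Longrightarrow> \<forall>w. f w \<noteq> 0 \<longrightarrow> sorted_wrt (<) w"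
  unfolding okf_def by (auto simp: strict_sorted_iff)

lemma okf_lin: assumes "okf X" "okf Y" shows "okf (\<lambda>w. a * X w + b * Y w)"
  unfolding okf_def
proof (intro allI impI)
  fix w assume "a * X w + b * Y w \<noteq> 0"
  then have "X w \<noteq> 0 \<or> Y w \<noteq> 0" by auto
  then show "w \<in> range sorted_list_of_set" using assms unfolding okf_def by blast
qed

lemma okf_tau_plus: "okf (tau_plus (q::'r::comm_ring_1) J)"
  unfolding okf_def
proof (intro allI impI)
  fix w assume "tau_plus q J w \<noteq> 0"
  then obtain I where "I \<in> {I. I \<subseteq> J \<and> even (card I)}" "(-1) ^ ell J I * (-q) ^ (card I div 2) * tset (J - I) w \<noteq> 0"
    unfolding tau_plus_def by (rule sum.not_neutral_contains_not_neutral)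
  then have "tset (J - I) w \<noteq> (0::'r)" by auto
  then have "w = sorted_list_of_set (J - I)" by (simp add: tset_def Defs.mono_def split: if_splits)
  then show "w \<in> range sorted_list_of_set" by simp
qed

lemma okf_tau_minus: "okf (tau_minus (q::'r::comm_ring_1) J)"
  unfolding okf_def
proof (intro allI impI)
  fix w assume "tau_minus q J w \<noteq> 0"
  then obtain I where "I \<in> {I. I \<subseteq> J \<and> odd (card I)}" "(-1) ^ ell J I * (-q) ^ ((card I - 1) div 2) * tset (J - I) w \<noteq> 0"
    unfolding tau_minus_def by (rule sum.not_neutral_contains_not_neutral)
  then have "tset (J - I) w \<noteq> (0::'r)" by auto
  then have "w = sorted_list_of_set (J - I)" by (simp add: tset_def Defs.mono_def split: if_splits)
  then show "w \<in> range sorted_list_of_set" by simp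
qed

lemmas okf_tau = okf_tau_plus okf_tau_minus

lemma supp_gen: "supp (fmul (gen s) Y) \<subseteq> (Cons s) ` supp Y"
proof
  fix x assume "x \<in> supp (fmul (gen s) Y)"
  then have "take 1 x = [s]" "Y (drop 1 x) \<noteq> 0" by (auto simp: supp_def fmul_gen split: if_splits)
  then show "x \<in> (Cons s) ` supp Y" by (cases x) (auto simp: supp_def)
qed

lemma NF_gen:
  assumes "finite (supp Y)"
  shows "NF q (fmul (gen s) Y) K = Tg q s (NF q Y) K"
proof -
  note sub = supp_gen[of s Y]
  have "NF q (fmul (gen s) Y) K = (\<Sum>x\<in>(Cons s) ` supp Y. fmul (gen s) Y x * act q x e0 K)"
    by (rule NF_superset) (use assms sub in auto)
  also have "\<dots> = (\<Sum>y\<in>supp Y. Y y * Tg q s (act q y e0) K)"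
    by (subst sum.reindex) (auto simp: fmul_gen)
  also have "\<dots> = Tg q s (NF q Y) K"
    unfolding NF_def by (rule Tg_sum[symmetric])
  finally show ?thesis .
qed

lemma fin_gen: "finite (supp Y) \<Longrightarrow> finite (supp (fmul (gen s) Y))"
  by (rule finite_subset[OF supp_gen]) simp

lemma wdg_eJ_min:
  assumes "\<forall>x\<in>J0. (j::'a::{linorder,finite}) < x"
  shows "wdg j (eJ J0) = (eJ (insert j J0) :: 'a set \<Rightarrow> 'r::comm_ring_1)"
proof
  fix K
  have jJ: "j \<notin> J0" using assms by auto
  show "wdg j (eJ J0) K = (eJ (insert j J0) K :: 'r)"
  proof (cases "K = insert j J0")
    case True
    have e: "{k \<in> insert j J0. k < j} = {}" using assms by auto
    have "sg (insert j J0) j = (1::'r)" unfolding sg_def e by simp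
    then show ?thesis using True jJ by (simp add: wdg_def eJ_def)
  next
    case False
    then show ?thesis using jJ by (auto simp: wdg_def eJ_def)
  qed
qed

lemma NF_tau:
  fixes q :: "'r::comm_ring_1"
  shows "NF q (tau_plus q J) = eJ J \<and> NF q (tau_minus q (J::'a::{linorder,finite} set)) = bd (eJ J)"
proof (induction "card J" arbitrary: J rule: less_induct)
  case less
  show ?case
  proof (cases "J = {}")
    case True
    have tp: "tau_plus q J = Defs.mono []"
    proof
      fix w
      have "{I. I \<subseteq> J \<and> even (card I)} = {{}}" using True by auto
      then show "tau_plus q J w = Defs.mono [] w" using True by (simp add: tau_plus_def ell_def tset_def)
    qed
    have tm: "tau_minus q J = (\<lambda>w. 0)"
    proof
      fix w
      have e: "{I. I \<subseteq> J \<and> odd (card I)} = {}" using True by auto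
      show "tau_minus q J w = 0" unfolding tau_minus_def e by simp
    qed
    have "NF q (tau_plus q J) K = eJ J K" for K unfolding tp NF_mono using True by (simp add: e0_def eJ_def)
    moreover have "NF q (tau_minus q J) K = bd (eJ J) K" for K unfolding tm using True by (simp add: NF_def supp_def bd_def eJ_def)
    ultimately show ?thesis by (simp add: fun_eq_iff)
  next
    case False
    define j where "j = Min J"
    define J0 where "J0 = J - {j}"
    have jJ: "j \<in> J" using False j_def by simp
    have J: "J = insert j J0" using jJ J0_def by auto
    have mn: "\<forall>x\<in>J0. j < x" using J0_def j_def by (auto simp: order.not_eq_order_implies_strict)
    have lt: "card J0 < card J" unfolding J0_def by (rule card_Diff1_less[OF finite jJ])
    have IH: "NF q (tau_plus q J0) = eJ J0" "NF q (tau_minus q J0) = bd (eJ J0)" using less lt by auto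
    have fins: "finite (supp (tau_plus q J0))" "finite (supp (tau_minus q J0))"
      by (rule okf_fin[OF okf_tau(1)], rule okf_fin[OF okf_tau(2)])
    have rp: "tau_plus q J = (\<lambda>w. 1 * fmul (gen j) (tau_plus q J0) w + (-q) * tau_minus q J0 w)"
      unfolding J by (rule ext) (simp add: tau_plus_rec[OF mn])
    have rm: "tau_minus q J = (\<lambda>w. 1 * tau_plus q J0 w + (-1) * fmul (gen j) (tau_minus q J0) w)"
      unfolding J by (rule ext) (simp add: tau_minus_rec[OF mn])
    have we: "wdg j (eJ J0) = (eJ J :: 'a set \<Rightarrow> 'r)" unfolding J by (rule wdg_eJ_min[OF mn])
    have "NF q (tau_plus q J) = eJ J"
    proof
      fix K
      have "NF q (tau_plus q J) K = Tg q j (eJ J0) K - q * bd (eJ J0) K"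
        unfolding rp by (subst NF_lin) (simp_all add: fin_gen fins NF_gen IH)
      also have "\<dots> = eJ J K" by (simp add: Tg_def we)
      finally show "NF q (tau_plus q J) K = eJ J K" .
    qed
    moreover have "NF q (tau_minus q J) = bd (eJ J)"
    proof
      fix K
      have "NF q (tau_minus q J) K = eJ J0 K - Tg q j (bd (eJ J0)) K"
        unfolding rm by (subst NF_lin) (simp_all add: fin_gen fins NF_gen IH)
      also have "\<dots> = eJ J0 K - (wdg j (bd (eJ J0)) K + bd (wdg j (eJ J0)) K) + bd (wdg j (eJ J0)) K - q * bd (bd (eJ J0)) K"
        by (simp add: Tg_def bd_add bd_smul algebra_simps)
      also have "\<dots> = bd (eJ J) K" by (simp only: wdg_bd bd_bd) (simp add: we)
      finally show "NF q (tau_minus q J) K = bd (eJ J) K" .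
    qed
    ultimately show ?thesis ..
  qed
qed

lemma final_step:
  fixes q :: "'r::comm_ring_1" and L T :: "('a::{linorder,finite}, 'r) falg"
  assumes "finite (supp L)" "okf T" "\<And>K. NF q T K = NF q L K"
  shows "reduces (Gq q) L T"
proof -
  obtain h where h: "reduces (Gq q) L h" "\<forall>w. h w \<noteq> 0 \<longrightarrow> sorted_wrt (<) w" "finite (supp h)" "NF q h = NF q L"
    using reduce_nf[OF assms(1), of q] by blast
  have "h = T"
    by (rule NF_inj[of h T q]) (use h assms okf_fin[OF assms(2)] okf_nrm[OF assms(2)] in auto)
  then show ?thesis using h(1) by simp
qed

lemma NF_smul: "finite (supp X) \<Longrightarrow> NF q (smul c X) K = c * NF q X K"
proof -
  assume f: "finite (supp X)"
  have "smul c X = (\<lambda>w. c * X w + 0 * X w)" by (rule ext) (simp add: smul_def)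
  then show ?thesis using NF_lin[OF f f, of q c 0 K] by simp
qed

lemma NF_fadd_smul: "finite (supp X) \<Longrightarrow> finite (supp Y) \<Longrightarrow> NF q (fadd (smul a X) (smul b Y)) K = a * NF q X K + b * NF q Y K"
proof -
  assume f: "finite (supp X)" "finite (supp Y)"
  have "fadd (smul a X) (smul b Y) = (\<lambda>w. a * X w + b * Y w)" by (rule ext) (simp add: smul_def fadd_def)
  then show ?thesis using NF_lin[OF f, of q a b K] by simp
qed

lemma NF_fadd_smul1: "finite (supp X) \<Longrightarrow> finite (supp Y) \<Longrightarrow> NF q (fadd (smul a X) Y) K = a * NF q X K + NF q Y K"
proof -
  assume f: "finite (supp X)" "finite (supp Y)"
  have "fadd (smul a X) Y = (\<lambda>w. a * X w + 1 * Y w)" by (rule ext) (simp add: smul_def fadd_def)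
  then show ?thesis using NF_lin[OF f, of q a 1 K] by simp
qed

lemma okf_smul: assumes "okf X" shows "okf (smul c X)"
  unfolding okf_def smul_def
proof (intro allI impI)
  fix w assume "c * X w \<noteq> 0"
  then have "X w \<noteq> 0" by auto
  then show "w \<in> range sorted_list_of_set" using assms unfolding okf_def by blast
qed

lemma okf_fadd: assumes "okf X" "okf Y" shows "okf (fadd X Y)"
  unfolding okf_def fadd_def
proof (intro allI impI)
  fix w assume "X w + Y w \<noteq> 0"
  then have "X w \<noteq> 0 \<or> Y w \<noteq> 0" by auto
  then show "w \<in> range sorted_list_of_set" using assms unfolding okf_def by blast
qed

lemma Tg_bd: "Tg q s (bd X) K = X K - bd (wdg s X) K"
proof -
  have "Tg q s (bd X) K = (wdg s (bd X) K + bd (wdg s X) K) - bd (wdg s X) K + q * bd (bd X) K"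
    by (simp add: Tg_def)
  also have "\<dots> = X K - bd (wdg s X) K" by (simp only: wdg_bd bd_bd) simp
  finally show ?thesis .
qed

theorem lemma3p5:
  fixes J :: "'a::{linorder,finite} set" and s :: 'a and q :: "'r::comm_ring_1"
  shows "(s \<in> J \<longrightarrow>
            reduces (Gq q) (fmul (gen s) (tau_plus q J)) (smul q (tau_minus q J)) \<and>
            reduces (Gq q) (fmul (gen s) (tau_minus q J)) (tau_plus q J))
       \<and> (s \<notin> J \<longrightarrow>
            (let J' = {j \<in> J. j < s} in
             reduces (Gq q) (fmul (gen s) (tau_plus q J))
               (fadd (smul ((-1) ^ card J') (tau_plus q (insert s J))) (smul q (tau_minus q J))) \<and>
             reduces (Gq q) (fmul (gen s) (tau_minus q J))
               (fadd (smul (- ((-1) ^ card J')) (tau_minus q (insert s J))) (tau_plus q J))))"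
proof -
  have finp: "finite (supp (tau_plus q J'))" "finite (supp (tau_minus q J'))" for J' :: "'a set"
    by (rule okf_fin[OF okf_tau(1)], rule okf_fin[OF okf_tau(2)])
  have NFp: "NF q (tau_plus q J') K = eJ J' K" "NF q (tau_minus q J') K = bd (eJ J') K" for J' :: "'a set" and K
    using NF_tau[of q J'] by auto
  have e1: "NF q (tau_plus q J) = eJ J" and e2: "NF q (tau_minus q J) = bd (eJ J)" using NF_tau[of q J] by auto
  have L1: "NF q (fmul (gen s) (tau_plus q J)) K = Tg q s (eJ J) K" for K
    by (simp only: NF_gen[OF finp(1)] e1)
  have L2: "NF q (fmul (gen s) (tau_minus q J)) K = Tg q s (bd (eJ J)) K" for K
    by (simp only: NF_gen[OF finp(2)] e2)
  have fL: "finite (supp (fmul (gen s) (tau_plus q J)))" "finite (supp (fmul (gen s) (tau_minus q J)))"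
    by (rule fin_gen[OF finp(1)], rule fin_gen[OF finp(2)])
  show ?thesis
  proof (intro conjI impI)
    assume sJ: "s \<in> J"
    have w0: "wdg s (eJ J) = (\<lambda>K. 0 :: 'r)" using sJ by (auto simp: wdg_def eJ_def)
    have bd0: "bd (\<lambda>K. 0) K = (0::'r)" for K by (simp add: bd_def)
    show "reduces (Gq q) (fmul (gen s) (tau_plus q J)) (smul q (tau_minus q J))"
    proof (rule final_step[OF fL(1)])
      show "okf (smul q (tau_minus q J))" by (intro okf_smul okf_tau)
      fix K
      have "Tg q s (eJ J) K = q * bd (eJ J) K" by (simp add: Tg_def w0)
      then show "NF q (smul q (tau_minus q J)) K = NF q (fmul (gen s) (tau_plus q J)) K"
        by (simp only: L1 NF_smul[OF finp(2)] NFp)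
    qed
    show "reduces (Gq q) (fmul (gen s) (tau_minus q J)) (tau_plus q J)"
    proof (rule final_step[OF fL(2)])
      show "okf (tau_plus q J)" by (rule okf_tau)
      fix K
      have "Tg q s (bd (eJ J)) K = eJ J K" by (simp only: Tg_bd w0 bd0) simp
      then show "NF q (tau_plus q J) K = NF q (fmul (gen s) (tau_minus q J)) K"
        by (simp only: L2 NFp)
    qed
  next
    assume sJ: "s \<notin> J"
    define c :: 'r where "c = (-1) ^ card {j \<in> J. j < s}"
    have sgc: "sg (insert s J) s = c" unfolding c_def sg_self_insert by (simp add: sg_def)
    have we: "wdg s (eJ J) = (\<lambda>K. c * eJ (insert s J) K)"
    proof
      fix K show "wdg s (eJ J) K = c * eJ (insert s J) K"
      proof (cases "K = insert s J")
        case True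
        then show ?thesis using sJ sgc by (simp add: wdg_def eJ_def)
      next
        case False
        then show ?thesis using sJ by (auto simp: wdg_def eJ_def)
      qed
    qed
    have r1: "reduces (Gq q) (fmul (gen s) (tau_plus q J)) (fadd (smul c (tau_plus q (insert s J))) (smul q (tau_minus q J)))"
    proof (rule final_step[OF fL(1)])
      show "okf (fadd (smul c (tau_plus q (insert s J))) (smul q (tau_minus q J)))" by (intro okf_fadd okf_smul okf_tau)
      fix K
      have "Tg q s (eJ J) K = c * eJ (insert s J) K + q * bd (eJ J) K" by (simp add: Tg_def we)
      then show "NF q (fadd (smul c (tau_plus q (insert s J))) (smul q (tau_minus q J))) K = NF q (fmul (gen s) (tau_plus q J)) K"
        by (simp only: L1 NF_fadd_smul[OF finp(1) finp(2)] NFp)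
    qed
    have r2: "reduces (Gq q) (fmul (gen s) (tau_minus q J)) (fadd (smul (- c) (tau_minus q (insert s J))) (tau_plus q J))"
    proof (rule final_step[OF fL(2)])
      show "okf (fadd (smul (- c) (tau_minus q (insert s J))) (tau_plus q J))" by (intro okf_fadd okf_smul okf_tau)
      fix K
      have "Tg q s (bd (eJ J)) K = eJ J K - bd (\<lambda>K. c * eJ (insert s J) K) K" by (simp only: Tg_bd we)
      also have "\<dots> = - c * bd (eJ (insert s J)) K + eJ J K" by (simp only: bd_smul) simp
      finally show "NF q (fadd (smul (- c) (tau_minus q (insert s J))) (tau_plus q J)) K = NF q (fmul (gen s) (tau_minus q J)) K"
        by (simp only: L2 NF_fadd_smul1[OF finp(2) finp(1)] NFp)
    qed
    show "let J' = {j \<in> J. j < s} in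
             reduces (Gq q) (fmul (gen s) (tau_plus q J))
               (fadd (smul ((-1) ^ card J') (tau_plus q (insert s J))) (smul q (tau_minus q J))) \<and>
             reduces (Gq q) (fmul (gen s) (tau_minus q J))
               (fadd (smul (- ((-1) ^ card J')) (tau_minus q (insert s J))) (tau_plus q J))"
      unfolding Let_def using r1 r2 unfolding c_def by (rule conjI)
  qed
qed

end
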